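(* Let $\gamma:=\prod_{j=1}^\infty(1-2^{-j})$. For every integer $a\ge 1$ there is a sequence of examples, indexed by $m\to\infty$, each consisting of integers $n$ and a set $U\subseteq\mathbb{F}_2^n\setminus\{0\}$ of $|U|=2^m$ distinct nonzero vectors, such that for a uniformly random linear map $B:\mathbb{F}_2^n\to\mathbb{F}_2^m$, \[ \liminf_{m\to\infty}\Pr\left[|\{u\in U: Bu=0\}|>2^a-2\right]\ge\gamma^{-1}2^{-a^2}(1-2^{-a})^2. \]
   Context: A uniformly random linear map $\mathbb{F}_2^n\to\mathbb{F}_2^m$ is one chosen uniformly among all linear maps. *)

theory Defs
  imports "HOL-Analysis.Analysis"
begin

text \<open>Vectors of F_2^n are encoded as functions nat => bool vanishing outside {..<n}
  (True = 1). A linear map F_2^n -> F_2^m is encoded by its m x n matrix over F_2,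
  a function nat => nat => bool vanishing outside {..<m} x {..<n}; this is a bijection
  between linear maps and such matrices, so a uniform linear map is a uniform matrix.\<close>

definition f2vecs :: "nat \<Rightarrow> (nat \<Rightarrow> bool) set" where
  "f2vecs n = {v. \<forall>j\<ge>n. \<not> v j}"

definition f2zero :: "nat \<Rightarrow> bool" where
  "f2zero = (\<lambda>_. False)"

definition f2mats :: "nat \<Rightarrow> nat \<Rightarrow> (nat \<Rightarrow> nat \<Rightarrow> bool) set" where
  "f2mats m n = {B. \<forall>i j. (m \<le> i \<or> n \<le> j) \<longrightarrow> \<not> B i j}"

definition f2apply :: "nat \<Rightarrow> (nat \<Rightarrow> nat \<Rightarrow> bool) \<Rightarrow> (nat \<Rightarrow> bool) \<Rightarrow> (nat \<Rightarrow> bool)" where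
  "f2apply n B u = (\<lambda>i. odd (card {j. j < n \<and> B i j \<and> u j}))"

definition f2prob :: "nat \<Rightarrow> nat \<Rightarrow> ((nat \<Rightarrow> nat \<Rightarrow> bool) \<Rightarrow> bool) \<Rightarrow> real" where
  "f2prob m n P = real (card {B \<in> f2mats m n. P B}) / real (card (f2mats m n))"

definition gamma_const :: real where
  "gamma_const = (\<Prod>j. 1 - (1/2::real) ^ Suc j)"

end

theory Submission
  imports Defs
begin


lemma gamma_conv: "convergent_prod (\<lambda>j. 1 - (1/2::real) ^ Suc j)"
proof -
  have "summable (\<lambda>i. norm ((1 - (1/2::real) ^ Suc i) - 1))"
    by (simp add: summable_geometric summable_mult)
  then show ?thesis
    by (intro abs_convergent_prod_imp_convergent_prod) (simp add: abs_convergent_prod_conv_summable)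
qed

lemma gamma_lim: "(\<lambda>k. \<Prod>j<k. 1 - (1/2::real) ^ Suc j) \<longlonglongrightarrow> gamma_const"
proof -
  have "(\<lambda>n. \<Prod>i\<le>n. 1 - (1/2::real) ^ Suc i) \<longlonglongrightarrow> gamma_const"
    unfolding gamma_const_def by (rule convergent_prod_LIMSEQ[OF gamma_conv])
  then show ?thesis by (simp add: LIMSEQ_lessThan_iff_atMost)
qed

lemma gamma_nz: "gamma_const \<noteq> 0"
  unfolding gamma_const_def
proof (rule prodinf_nonzero[OF gamma_conv])
  fix i :: nat
  have "(1/2::real)^Suc i < 1" by (rule power_Suc_less_one) auto
  then show "1 - (1/2::real)^Suc i \<noteq> 0" by simp
qed



definition xorv :: "(nat \<Rightarrow> bool) \<Rightarrow> (nat \<Rightarrow> bool) \<Rightarrow> (nat \<Rightarrow> bool)" where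
  "xorv u v = (\<lambda>j. u j \<noteq> v j)"

lemma xorv_self[simp]: "xorv u u = f2zero" by (simp add: xorv_def f2zero_def)
lemma xorv_zero[simp]: "xorv u f2zero = u" "xorv f2zero u = u" by (auto simp add: xorv_def f2zero_def)
lemma xorv_assoc: "xorv (xorv u v) w = xorv u (xorv v w)" by (auto simp add: xorv_def)
lemma xorv_comm: "xorv u v = xorv v u" by (auto simp add: xorv_def)
lemma xorv_cancel[simp]: "xorv u (xorv u v) = v" by (auto simp add: xorv_def)
lemma inj_xorv: "inj (xorv u)" by (metis injI xorv_cancel)

lemma f2vecs_xorv: "u \<in> f2vecs n \<Longrightarrow> v \<in> f2vecs n \<Longrightarrow> xorv u v \<in> f2vecs n"
  by (simp add: f2vecs_def xorv_def)
lemma f2zero_vecs[simp]: "f2zero \<in> f2vecs n" by (simp add: f2vecs_def f2zero_def)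

lemma apply_0: "f2apply 0 B u = f2zero"
  by (simp add: f2apply_def f2zero_def)

lemma apply_Suc: "f2apply (Suc k) B u = (\<lambda>i. f2apply k B u i \<noteq> (B i k \<and> u k))"
proof
  fix i
  have e: "{j. j < Suc k \<and> B i j \<and> u j} = {j. j < k \<and> B i j \<and> u j} \<union> (if B i k \<and> u k then {k} else {})"
    by (auto simp: less_Suc_eq)
  show "f2apply (Suc k) B u i = (f2apply k B u i \<noteq> (B i k \<and> u k))"
    unfolding f2apply_def e by auto
qed

lemma apply_xorv: "f2apply n B (xorv u v) = xorv (f2apply n B u) (f2apply n B v)"
  by (induction n) (auto simp: apply_0 apply_Suc xorv_def)

lemma apply_zero[simp]: "f2apply n B f2zero = f2zero"
  by (metis apply_xorv xorv_self)

lemma apply_cong: "(\<And>i j. j < k \<Longrightarrow> B i j = B' i j) \<Longrightarrow> (\<And>j. j < k \<Longrightarrow> u j = u' j) \<Longrightarrow>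
   f2apply k B u = f2apply k B' u'"
  unfolding f2apply_def by (intro ext arg_cong[where f="\<lambda>S. odd (card S)"]) auto

lemma card_f2vecs: "card (f2vecs m) = 2 ^ m" "finite (f2vecs m)"
proof -
  have e: "f2vecs m = (\<lambda>S j. j \<in> S) ` Pow {..<m}"
  proof
    show "f2vecs m \<subseteq> (\<lambda>S j. j \<in> S) ` Pow {..<m}"
    proof
      fix v assume "v \<in> f2vecs m"
      then have "{j. v j} \<in> Pow {..<m}" "v = (\<lambda>j. j \<in> {j. v j})"
        by (auto simp: f2vecs_def not_le[symmetric])
      then show "v \<in> (\<lambda>S j. j \<in> S) ` Pow {..<m}" by blast
    qed
  qed (auto simp: f2vecs_def)
  have i: "inj_on (\<lambda>S j. j \<in> S) (Pow {..<m})"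
    by (rule inj_onI) (metis Collect_mem_eq)
  show "card (f2vecs m) = 2 ^ m" unfolding e using i by (simp add: card_image card_Pow)
  show "finite (f2vecs m)" unfolding e by simp
qed

lemma card_f2mats: "card (f2mats m k) = 2 ^ (m * k)" "finite (f2mats m k)"
proof -
  have e: "f2mats m k = (\<lambda>S i j. (i, j) \<in> S) ` Pow ({..<m} \<times> {..<k})"
  proof
    show "f2mats m k \<subseteq> (\<lambda>S i j. (i, j) \<in> S) ` Pow ({..<m} \<times> {..<k})"
    proof
      fix B assume "B \<in> f2mats m k"
      then have "{(i, j). B i j} \<in> Pow ({..<m} \<times> {..<k})" "B = (\<lambda>i j. (i, j) \<in> {(i, j). B i j})"
        by (auto simp: f2mats_def not_le[symmetric])
      then show "B \<in> (\<lambda>S i j. (i, j) \<in> S) ` Pow ({..<m} \<times> {..<k})" by blast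
    qed
  qed (auto simp: f2mats_def)
  have i: "inj_on (\<lambda>S i j. (i, j) \<in> S) (Pow ({..<m} \<times> {..<k}))"
  proof (rule inj_onI)
    fix S T :: "(nat \<times> nat) set" assume "(\<lambda>i j. (i, j) \<in> S) = (\<lambda>i j. (i, j) \<in> T)"
    then have "\<And>i j. ((i, j) \<in> S) = ((i, j) \<in> T)" by metis
    then show "S = T" by auto
  qed
  show "card (f2mats m k) = 2 ^ (m * k)" unfolding e using i by (simp add: card_image card_Pow card_cartesian_product)
  show "finite (f2mats m k)" unfolding e by simp
qed



definition restr :: "nat \<Rightarrow> (nat \<Rightarrow> nat \<Rightarrow> bool) \<Rightarrow> (nat \<Rightarrow> nat \<Rightarrow> bool)" where
  "restr k B = (\<lambda>i j. j < k \<and> B i j)"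
definition col :: "nat \<Rightarrow> (nat \<Rightarrow> nat \<Rightarrow> bool) \<Rightarrow> (nat \<Rightarrow> bool)" where
  "col k B = (\<lambda>i. B i k)"
definition extm :: "(nat \<Rightarrow> nat \<Rightarrow> bool) \<Rightarrow> (nat \<Rightarrow> bool) \<Rightarrow> nat \<Rightarrow> (nat \<Rightarrow> nat \<Rightarrow> bool)" where
  "extm B' c k = (\<lambda>i j. if j = k then c i else B' i j)"

lemma restr_extm: "B' \<in> f2mats m k \<Longrightarrow> restr k (extm B' c k) = B'"
  by (auto simp: extm_def restr_def f2mats_def fun_eq_iff) (meson leI)

lemma extm_restr: "B \<in> f2mats m (Suc k) \<Longrightarrow> extm (restr k B) (col k B) k = B"
  by (auto simp: extm_def restr_def col_def f2mats_def fun_eq_iff) (metis less_SucE leI)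

lemma split_card:
  "card {B \<in> f2mats m (Suc k). P (restr k B) (col k B)} = (\<Sum>B'\<in>f2mats m k. card {c \<in> f2vecs m. P B' c})"
proof -
  let ?S = "SIGMA B':f2mats m k. {c \<in> f2vecs m. P B' c}"
  have "{B \<in> f2mats m (Suc k). P (restr k B) (col k B)} = (\<lambda>(B', c). extm B' c k) ` ?S"
  proof
    show "{B \<in> f2mats m (Suc k). P (restr k B) (col k B)} \<subseteq> (\<lambda>(B', c). extm B' c k) ` ?S"
    proof
      fix B assume B: "B \<in> {B \<in> f2mats m (Suc k). P (restr k B) (col k B)}"
      have "B = extm (restr k B) (col k B) k"
        using B extm_restr by auto
      moreover have "(restr k B, col k B) \<in> ?S"
        using B by (auto simp: restr_def col_def f2mats_def f2vecs_def)
      ultimately show "B \<in> (\<lambda>(B', c). extm B' c k) ` ?S" by force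
    qed
    show "(\<lambda>(B', c). extm B' c k) ` ?S \<subseteq> {B \<in> f2mats m (Suc k). P (restr k B) (col k B)}"
    proof clarify
      fix B' c assume a: "B' \<in> f2mats m k" "c \<in> f2vecs m" "P B' c"
      have "restr k (extm B' c k) = B'"
        using a(1) by (rule restr_extm)
      moreover have "col k (extm B' c k) = c" by (simp add: col_def extm_def)
      moreover have "extm B' c k \<in> f2mats m (Suc k)"
        using a(1,2) by (auto simp: extm_def f2mats_def f2vecs_def)
      ultimately show "extm B' c k \<in> f2mats m (Suc k) \<and> P (restr k (extm B' c k)) (col k (extm B' c k))"
        using a(3) by simp
    qed
  qed
  moreover have "inj_on (\<lambda>(B', c). extm B' c k) ?S"
  proof (rule inj_onI, clarify)
    fix B1 c1 B2 c2 assume a: "B1 \<in> f2mats m k" "B2 \<in> f2mats m k" "extm B1 c1 k = extm B2 c2 k"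
    have "restr k (extm B1 c1 k) = B1" "restr k (extm B2 c2 k) = B2"
      using a(1,2) by (simp_all add: restr_extm)
    moreover have "col k (extm B1 c1 k) = c1" "col k (extm B2 c2 k) = c2" by (simp_all add: col_def extm_def)
    ultimately show "B1 = B2 \<and> c1 = c2" using a(3) by metis
  qed
  ultimately show ?thesis
    by (simp add: card_image card_f2mats card_f2vecs)
qed

definition img :: "nat \<Rightarrow> (nat \<Rightarrow> nat \<Rightarrow> bool) \<Rightarrow> (nat \<Rightarrow> bool) set" where
  "img k B = f2apply k B ` f2vecs k"

lemma img_restr: "img k (restr k B) = img k B"
  unfolding img_def by (intro image_cong refl apply_cong) (auto simp: restr_def)

lemma img_finite: "finite (img k B)"
  by (simp add: img_def card_f2vecs)

lemma img_zero: "f2zero \<in> img k B"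
  unfolding img_def by (rule image_eqI[where x=f2zero]) simp_all

lemma img_closed: "x \<in> img k B \<Longrightarrow> y \<in> img k B \<Longrightarrow> xorv x y \<in> img k B"
proof -
  assume "x \<in> img k B" "y \<in> img k B"
  then obtain u v where uv: "u \<in> f2vecs k" "v \<in> f2vecs k" "x = f2apply k B u" "y = f2apply k B v"
    unfolding img_def by blast
  then have "xorv x y = f2apply k B (xorv u v)" by (simp add: apply_xorv)
  then show ?thesis unfolding img_def using f2vecs_xorv[OF uv(1,2)] by blast
qed

lemma img_sub: "B \<in> f2mats m k \<Longrightarrow> img k B \<subseteq> f2vecs m"
proof
  fix y assume B: "B \<in> f2mats m k" and "y \<in> img k B"
  then obtain u where u: "y = f2apply k B u" unfolding img_def by blast
  have "\<not> y i" if "i \<ge> m" for i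
  proof -
    have e: "{j. j < k \<and> B i j \<and> u j} = {}" using B that by (auto simp: f2mats_def)
    show ?thesis unfolding u f2apply_def by (subst e) simp
  qed
  then show "y \<in> f2vecs m" by (simp add: f2vecs_def)
qed

lemma img_Suc: "img (Suc k) B = img k B \<union> xorv (col k B) ` img k B"
proof
  show "img (Suc k) B \<subseteq> img k B \<union> xorv (col k B) ` img k B"
  proof
    fix y assume "y \<in> img (Suc k) B"
    then obtain u where u: "u \<in> f2vecs (Suc k)" "y = f2apply (Suc k) B u" by (auto simp: img_def)
    define u' where "u' = u(k := False)"
    have u': "u' \<in> f2vecs k" using u(1) by (auto simp: u'_def f2vecs_def)
    have e: "f2apply k B u = f2apply k B u'" by (rule apply_cong) (auto simp: u'_def)
    show "y \<in> img k B \<union> xorv (col k B) ` img k B"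
    proof (cases "u k")
      case True
      then have "y = xorv (col k B) (f2apply k B u')"
        using u(2) e by (auto simp: apply_Suc xorv_def col_def)
      then show ?thesis using u' by (auto simp: img_def)
    next
      case False
      then have "y = f2apply k B u'"
        using u(2) e by (auto simp: apply_Suc)
      then show ?thesis using u' by (auto simp: img_def)
    qed
  qed
  show "img k B \<union> xorv (col k B) ` img k B \<subseteq> img (Suc k) B"
  proof
    fix y assume "y \<in> img k B \<union> xorv (col k B) ` img k B"
    then obtain u where u: "u \<in> f2vecs k" "y = f2apply k B u \<or> y = xorv (col k B) (f2apply k B u)"
      by (auto simp: img_def)
    have u1: "u \<in> f2vecs (Suc k)" "u(k := True) \<in> f2vecs (Suc k)" using u(1) by (auto simp: f2vecs_def)
    have uk: "\<not> u k" using u(1) by (auto simp: f2vecs_def)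
    have e: "f2apply k B (u(k := True)) = f2apply k B u" by (rule apply_cong) auto
    have "f2apply (Suc k) B u = f2apply k B u" using uk by (simp add: apply_Suc)
    moreover have "f2apply (Suc k) B (u(k := True)) = xorv (col k B) (f2apply k B u)"
      using e by (auto simp: apply_Suc xorv_def col_def)
    ultimately show "y \<in> img (Suc k) B" using u(2) u1 unfolding img_def by (metis imageI)
  qed
qed

lemma union_in:
  assumes cl: "\<And>x y. x \<in> S \<Longrightarrow> y \<in> S \<Longrightarrow> xorv x y \<in> S" and c: "c \<in> S"
  shows "S \<union> xorv c ` S = S"
  using cl c by auto

lemma union_out:
  assumes cl: "\<And>x y. x \<in> S \<Longrightarrow> y \<in> S \<Longrightarrow> xorv x y \<in> S" and c: "c \<notin> S" and f: "finite S"
  shows "card (S \<union> xorv c ` S) = 2 * card S"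
proof -
  have d: "S \<inter> xorv c ` S = {}"
  proof (rule ccontr)
    assume "S \<inter> xorv c ` S \<noteq> {}"
    then obtain x y where "x \<in> S" "y \<in> S" "x = xorv c y" by auto
    then have "xorv x y = c" by (simp add: xorv_assoc xorv_comm[of c])
    with cl \<open>x \<in> S\<close> \<open>y \<in> S\<close> c show False by metis
  qed
  have "card (xorv c ` S) = card S" by (rule card_image) (meson inj_xorv inj_on_subset subset_UNIV)
  then show ?thesis using d f by (simp add: card_Un_disjoint)
qed

lemma img_pow: "\<exists>s. card (img k B) = 2 ^ s"
proof (induction k)
  case 0
  have "img 0 B = {f2zero}" by (auto simp: img_def apply_0 intro: f2zero_vecs)
  then show ?case by (metis card.empty card_insert_disjoint empty_iff finite.emptyI power_0 One_nat_def)
next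
  case (Suc k)
  then obtain s where s: "card (img k B) = 2 ^ s" by blast
  show ?case
  proof (cases "col k B \<in> img k B")
    case True
    then show ?thesis using s by (simp add: img_Suc union_in img_closed)
  next
    case False
    then have "card (img (Suc k) B) = 2 ^ Suc s"
      using s by (simp add: img_Suc union_out img_closed img_finite)
    then show ?thesis by blast
  qed
qed

lemma ext_count:
  assumes cl: "\<And>x y. x \<in> S \<Longrightarrow> y \<in> S \<Longrightarrow> xorv x y \<in> S" and f: "finite S"
    and sub: "S \<subseteq> f2vecs m" and s: "card S = 2 ^ s"
  shows "card {c \<in> f2vecs m. card (S \<union> xorv c ` S) = 2 ^ r} =
     (if s = r then 2 ^ r else 0) + (if r = Suc s then 2 ^ m - 2 ^ s else 0)"
proof -
  have e: "{c \<in> f2vecs m. card (S \<union> xorv c ` S) = 2 ^ r} =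
    (if s = r then S else {}) \<union> (if r = Suc s then f2vecs m - S else {})"
  proof -
    have "c \<in> S \<Longrightarrow> card (S \<union> xorv c ` S) = 2 ^ s" for c using union_in[OF cl] s by simp
    moreover have "c \<notin> S \<Longrightarrow> card (S \<union> xorv c ` S) = 2 ^ Suc s" for c using union_out[OF cl _ f] s by simp
    ultimately have "card (S \<union> xorv c ` S) = 2 ^ r \<longleftrightarrow> (c \<in> S \<and> s = r) \<or> (c \<notin> S \<and> r = Suc s)" for c
      using power_inject_exp[of 2 "Suc s" r] power_inject_exp[of 2 s r] by (cases "c \<in> S") auto
    then show ?thesis using sub by auto
  qed
  have le: "card S \<le> 2 ^ m" using sub card_mono card_f2vecs by metis
  show ?thesis unfolding e using s le
    by (auto simp: card_f2vecs card_Diff_subset[OF f sub] card_Un_disjoint f)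
qed



definition Nc :: "nat \<Rightarrow> nat \<Rightarrow> nat \<Rightarrow> nat" where
  "Nc m k r = card {B \<in> f2mats m k. card (img k B) = 2 ^ r}"

lemma N_0: "Nc m 0 r = (if r = 0 then 1 else 0)"
proof -
  have M: "f2mats m 0 = {\<lambda>i j. False}" by (auto simp: f2mats_def)
  have "img 0 B = {f2zero}" for B by (auto simp: img_def apply_0 intro: f2zero_vecs)
  then show ?thesis unfolding Nc_def M by (auto simp: Collect_conv_if nat_power_eq_Suc_0_iff eq_commute[of "Suc 0"])
qed

lemma N_big: "m < r \<Longrightarrow> Nc m k r = 0"
proof -
  assume r: "m < r"
  have "card (img k B) \<noteq> 2 ^ r" if "B \<in> f2mats m k" for B
  proof -
    have "card (img k B) \<le> 2 ^ m" using img_sub[OF that] card_mono card_f2vecs by metis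
    moreover have "(2::nat) ^ m < 2 ^ r" using r by simp
    ultimately show ?thesis by linarith
  qed
  then have e: "{B \<in> f2mats m k. card (img k B) = 2 ^ r} = {}" by blast
  show ?thesis unfolding Nc_def e by simp
qed

lemma sum_if_const: "(\<Sum>x\<in>A. if P x then c else 0) = card {x \<in> A. P x} * (c::nat)" if "finite A"
proof -
  have "A \<inter> Collect P = {x \<in> A. P x}" by auto
  then show ?thesis using that by (simp add: sum.If_cases[OF that])
qed

lemma N_Suc: "Nc m (Suc k) r = Nc m k r * 2 ^ r + (if r > 0 then Nc m k (r - 1) * (2 ^ m - 2 ^ (r - 1)) else 0)"
proof -
  have e: "{B \<in> f2mats m (Suc k). card (img (Suc k) B) = 2 ^ r} =
    {B \<in> f2mats m (Suc k). (\<lambda>B' c. card (img k B' \<union> xorv c ` img k B') = 2 ^ r) (restr k B) (col k B)}"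
    by (simp add: img_Suc img_restr)
  have c: "card {c \<in> f2vecs m. card (img k B' \<union> xorv c ` img k B') = 2 ^ r} =
     (if card (img k B') = 2 ^ r then 2 ^ r else 0) + (if r > 0 \<and> card (img k B') = 2 ^ (r - 1) then 2 ^ m - 2 ^ (r - 1) else 0)"
    if B': "B' \<in> f2mats m k" for B'
  proof -
    obtain s where s: "card (img k B') = 2 ^ s" using img_pow by blast
    have X: "card {c \<in> f2vecs m. card (img k B' \<union> xorv c ` img k B') = 2 ^ r} =
      (if s = r then 2 ^ r else 0) + (if r = Suc s then 2 ^ m - 2 ^ s else 0)"
      by (rule ext_count[OF img_closed img_finite img_sub[OF B'] s])
    have inj: "(2::nat) ^ x = 2 * 2 ^ y \<longleftrightarrow> x = Suc y" for x y
    proof -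
      have "(2::nat) ^ x = 2 ^ (Suc y) \<longleftrightarrow> x = Suc y" by (rule power_inject_exp) simp
      then show ?thesis by simp
    qed
    show ?thesis unfolding s X by (cases r) (auto simp: inj)
  qed
  have fin: "finite (f2mats m k)" by (simp add: card_f2mats)
  have "Nc m (Suc k) r = (\<Sum>B'\<in>f2mats m k. card {c \<in> f2vecs m. card (img k B' \<union> xorv c ` img k B') = 2 ^ r})"
    unfolding Nc_def e by (rule split_card)
  also have "\<dots> = (\<Sum>B'\<in>f2mats m k. (if card (img k B') = 2 ^ r then 2 ^ r else 0) + (if r > 0 \<and> card (img k B') = 2 ^ (r - 1) then 2 ^ m - 2 ^ (r - 1) else 0))"
    by (rule sum.cong) (simp_all add: c)
  also have "\<dots> = Nc m k r * 2 ^ r + (if r > 0 then Nc m k (r - 1) * (2 ^ m - 2 ^ (r - 1)) else 0)"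
  proof -
    have 1: "(\<Sum>B'\<in>f2mats m k. if card (img k B') = 2 ^ r then 2 ^ r else 0) = Nc m k r * 2 ^ r"
      unfolding Nc_def by (rule sum_if_const[OF fin])
    have 2: "(\<Sum>B'\<in>f2mats m k. if r > 0 \<and> card (img k B') = 2 ^ (r - 1) then 2 ^ m - 2 ^ (r - 1) else 0)
       = (if r > 0 then Nc m k (r - 1) * (2 ^ m - 2 ^ (r - 1)) else 0)"
    proof (cases "r > 0")
      case True
      then show ?thesis unfolding Nc_def using sum_if_const[OF fin] by simp
    qed simp
    show ?thesis unfolding sum.distrib 1 2 ..
  qed
  finally show ?thesis .
qed

definition Num :: "nat \<Rightarrow> nat \<Rightarrow> real" where
  "Num k r = (\<Prod>i<r. 2 ^ k - 2 ^ i)"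

lemma Num_0[simp]: "Num k 0 = 1" by (simp add: Num_def)
lemma Num_Suc2: "Num k (Suc s) = Num k s * (2 ^ k - 2 ^ s)" by (simp add: Num_def)
lemma Num_Suc1: "Num (Suc k) (Suc s) = (2 ^ Suc k - 1) * 2 ^ s * Num k s"
proof -
  have "Num (Suc k) (Suc s) = (2 ^ Suc k - 2 ^ 0) * (\<Prod>i<s. 2 ^ Suc k - 2 ^ Suc i)"
    unfolding Num_def by (rule prod.lessThan_Suc_shift)
  also have "(\<Prod>i<s. (2::real) ^ Suc k - 2 ^ Suc i) = (\<Prod>i<s. 2 * (2 ^ k - 2 ^ i))"
    by (rule prod.cong) (simp_all add: right_diff_distrib)
  also have "\<dots> = 2 ^ s * Num k s"
    unfolding prod.distrib Num_def by simp
  finally show ?thesis by simp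
qed
lemma Num_pos: "Num r r > 0"
  unfolding Num_def by (rule prod_pos) simp
lemma Num_zero: "k < r \<Longrightarrow> Num k r = 0"
  unfolding Num_def by (rule prod_zero) auto

lemma closed: "real (Nc m k r) = Num k r * Num m r / Num r r"
proof (induction k arbitrary: r)
  case 0
  then show ?case by (cases r) (auto simp: N_0 Num_zero)
next
  case (Suc k)
  show ?case
  proof (cases r)
    case 0
    then show ?thesis using Suc[of 0] by (simp add: N_Suc)
  next
    case (Suc s)
    show ?thesis
    proof (cases "s < m")
      case False
      then show ?thesis using Suc by (simp add: N_big Num_zero)
    next
      case True
      have le: "(2::nat) ^ s \<le> 2 ^ m" using True by simp
      have "real (Nc m (Suc k) r) = real (Nc m k (Suc s)) * 2 ^ Suc s + real (Nc m k s) * (2 ^ m - 2 ^ s)"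
        unfolding Suc using le by (simp add: N_Suc of_nat_diff)
      also have "\<dots> = Num (Suc k) r * Num m r / Num r r"
      proof -
        have d: "Num s s > 0" by (rule Num_pos)
        have "(1::real) \<le> 2 ^ s" by simp
        then have t: "(2::real) * 2 ^ s - 1 > 0" by linarith
        have n1: "Num (Suc k) (Suc s) = (2 * 2 ^ k - 1) * 2 ^ s * Num k s" using Num_Suc1 by simp
        have n2: "Num (Suc s) (Suc s) = (2 * 2 ^ s - 1) * 2 ^ s * Num s s" using Num_Suc1 by simp
        have n3: "Num k (Suc s) = Num k s * (2 ^ k - 2 ^ s)" by (rule Num_Suc2)
        have n4: "Num m (Suc s) = Num m s * (2 ^ m - 2 ^ s)" by (rule Num_Suc2)
        have p: "(2::real) ^ s > 0" by simp
        show ?thesis unfolding Suc Suc.IH n1 n2 n3 n4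
          using d t p by (simp add: field_simps)
      qed
      finally show ?thesis .
    qed
  qed
qed



lemma rank_nullity:
  "card {u \<in> f2vecs m. f2apply m B u = f2zero} * card (img m B) = 2 ^ m"
proof -
  let ?K = "{u \<in> f2vecs m. f2apply m B u = f2zero}"
  let ?F = "\<lambda>y. {u \<in> f2vecs m. f2apply m B u = y}"
  have fin: "finite (f2vecs m)" by (simp add: card_f2vecs)
  have U: "f2vecs m = \<Union> (?F ` img m B)" by (auto simp: img_def)
  have fib: "card (?F y) = card ?K" if y: "y \<in> img m B" for y
  proof -
    obtain u0 where u0: "u0 \<in> f2vecs m" "f2apply m B u0 = y" using y by (auto simp: img_def)
    have "?F y = xorv u0 ` ?K"
    proof
      show "?F y \<subseteq> xorv u0 ` ?K"
      proof
        fix u assume u: "u \<in> ?F y"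
        have "xorv u0 u \<in> ?K" using u u0 by (simp add: apply_xorv f2vecs_xorv)
        moreover have "u = xorv u0 (xorv u0 u)" by simp
        ultimately show "u \<in> xorv u0 ` ?K" by blast
      qed
      show "xorv u0 ` ?K \<subseteq> ?F y"
        using u0 by (auto simp: apply_xorv f2vecs_xorv)
    qed
    then show ?thesis by (simp add: card_image inj_on_subset[OF inj_xorv])
  qed
  have "2 ^ m = card (\<Union> (?F ` img m B))" using U card_f2vecs by metis
  also have "\<dots> = (\<Sum>y\<in>img m B. card (?F y))"
    by (rule card_UN_disjoint) (auto simp: img_finite fin)
  also have "\<dots> = (\<Sum>y\<in>img m B. card ?K)" by (rule sum.cong) (simp_all add: fib)
  finally show ?thesis by simp
qed

definition Uset :: "nat \<Rightarrow> (nat \<Rightarrow> bool) set" where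
  "Uset m = (f2vecs m - {f2zero}) \<union> {\<lambda>j. j = m}"

lemma Uset_props: "Uset m \<subseteq> f2vecs (Suc m) - {f2zero}" "finite (Uset m)" "card (Uset m) = 2 ^ m"
proof -
  have e: "(\<lambda>j. j = m) \<notin> f2vecs m" by (simp add: f2vecs_def)
  have z: "(\<lambda>j. j = m) \<noteq> f2zero" by (simp add: f2zero_def fun_eq_iff)
  show "Uset m \<subseteq> f2vecs (Suc m) - {f2zero}" using z by (auto simp: Uset_def f2vecs_def)
  show "finite (Uset m)" by (simp add: Uset_def card_f2vecs)
  have "card (f2vecs m - {f2zero}) = 2 ^ m - 1" by (simp add: card_f2vecs)
  moreover have "(1::nat) \<le> 2 ^ m" by simp
  ultimately show "card (Uset m) = 2 ^ m" unfolding Uset_def using e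
    by (simp add: card_f2vecs)
qed

lemma event:
  assumes a: "a \<ge> 1" "a \<le> m" and B: "card (img m (restr m B)) = 2 ^ (m - a)"
  shows "card {u \<in> Uset m. f2apply (Suc m) B u = f2zero} > 2 ^ a - 2"
proof -
  let ?K = "{u \<in> f2vecs m. f2apply m B u = f2zero}"
  have "card ?K * 2 ^ (m - a) = 2 ^ a * 2 ^ (m - a)"
    using rank_nullity[of m B] B a by (simp add: img_restr power_add[symmetric])
  then have K: "card ?K = 2 ^ a" by simp
  have sub: "?K - {f2zero} \<subseteq> {u \<in> Uset m. f2apply (Suc m) B u = f2zero}"
  proof
    fix u assume u: "u \<in> ?K - {f2zero}"
    then have "\<not> u m" by (simp add: f2vecs_def)
    then have "f2apply (Suc m) B u = f2apply m B u" by (simp add: apply_Suc)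
    then show "u \<in> {u \<in> Uset m. f2apply (Suc m) B u = f2zero}" using u by (simp add: Uset_def)
  qed
  have "card (?K - {f2zero}) = 2 ^ a - 1" using K by (simp add: card_f2vecs)
  moreover have "card (?K - {f2zero}) \<le> card {u \<in> Uset m. f2apply (Suc m) B u = f2zero}"
    by (rule card_mono[OF _ sub]) (simp add: Uset_props(2))
  moreover have "(2::nat) \<le> 2 ^ a" using a(1) by (metis power_increasing power_one_right zero_less_numeral numeral_le_iff one_le_numeral le_numeral_extra(4) one_le_numeral) 
  ultimately show ?thesis by linarith
qed



lemma count_restr:
  "card {B \<in> f2mats m (Suc m). card (img m (restr m B)) = 2 ^ r} = Nc m m r * 2 ^ m"
proof -
  have fin: "finite (f2mats m m)" by (simp add: card_f2mats)
  have "card {B \<in> f2mats m (Suc m). (\<lambda>B' c. card (img m B') = 2 ^ r) (restr m B) (col m B)}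
     = (\<Sum>B'\<in>f2mats m m. card {c \<in> f2vecs m. card (img m B') = 2 ^ r})"
    by (rule split_card)
  also have "\<dots> = (\<Sum>B'\<in>f2mats m m. if card (img m B') = 2 ^ r then 2 ^ m else 0)"
    by (rule sum.cong) (simp_all add: card_f2vecs)
  also have "\<dots> = Nc m m r * 2 ^ m" unfolding Nc_def by (rule sum_if_const[OF fin])
  finally show ?thesis by simp
qed

lemma prob_lower:
  assumes a: "a \<ge> 1" "a \<le> m"
  shows "f2prob m (Suc m) (\<lambda>B. card {u \<in> Uset m. f2apply (Suc m) B u = f2zero} > 2 ^ a - 2)
     \<ge> real (Nc m m (m - a)) / 2 ^ (m * m)"
proof -
  let ?E = "{B \<in> f2mats m (Suc m). card {u \<in> Uset m. f2apply (Suc m) B u = f2zero} > 2 ^ a - 2}"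
  have "{B \<in> f2mats m (Suc m). card (img m (restr m B)) = 2 ^ (m - a)} \<subseteq> ?E"
    using event[OF a] by blast
  then have "card {B \<in> f2mats m (Suc m). card (img m (restr m B)) = 2 ^ (m - a)} \<le> card ?E"
    by (rule card_mono[rotated]) (simp add: card_f2mats)
  then have "Nc m m (m - a) * 2 ^ m \<le> card ?E" by (simp only: count_restr)
  then have "real (Nc m m (m - a) * 2 ^ m) \<le> real (card ?E)" by (simp only: of_nat_le_iff)
  then have "real (Nc m m (m - a)) * 2 ^ m \<le> real (card ?E)" by simp
  moreover have "(2::real) ^ (m * Suc m) = 2 ^ (m * m) * 2 ^ m" by (simp add: power_add)
  ultimately show ?thesis unfolding f2prob_def card_f2mats
    by (simp add: field_simps)
qed

definition W :: "nat \<Rightarrow> nat \<Rightarrow> real" where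
  "W a r = (\<Prod>j<r. 1 - (1/2) ^ (a + 1 + j))"

lemma Num_W: "Num (a + r) r = 2 ^ ((a + r) * r) * W a r"
proof -
  have "Num (a + r) r = (\<Prod>i<r. 2 ^ (a + r) - 2 ^ (r - Suc i))"
    unfolding Num_def by (rule prod.nat_diff_reindex[symmetric])
  also have "\<dots> = (\<Prod>i<r. 2 ^ (a + r) * (1 - (1/2) ^ (a + 1 + i)))"
  proof (rule prod.cong)
    fix i assume "i \<in> {..<r}"
    then have "(r - Suc i) + (a + 1 + i) = a + r" by simp
    then have "(2::real) ^ (r - Suc i) * 2 ^ (a + 1 + i) = 2 ^ (a + r)" by (metis power_add)
    then have "(2::real) ^ (r - Suc i) = 2 ^ (a + r) * (1/2) ^ (a + 1 + i)"
      by (simp add: field_simps power_one_over)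
    then show "(2::real) ^ (a + r) - 2 ^ (r - Suc i) = 2 ^ (a + r) * (1 - (1/2) ^ (a + 1 + i))"
      by (simp add: right_diff_distrib)
  qed simp
  also have "\<dots> = 2 ^ ((a + r) * r) * W a r"
    unfolding prod.distrib W_def by (simp only: prod_constant power_mult card_lessThan)
  finally show ?thesis .
qed

lemma W_bounds: "0 \<le> W a r" "W a r \<le> 1" "W a r \<ge> 1 - (1/2) ^ a + (1/2) ^ (a + r)"
proof -
  have f: "0 \<le> 1 - (1/2::real) ^ n" "1 - (1/2::real) ^ n \<le> 1" for n
    by (simp_all add: power_le_one)
  show "0 \<le> W a r" unfolding W_def by (rule prod_nonneg) (use f in blast)
  show "W a r \<le> 1" unfolding W_def by (rule prod_le_1) (use f in blast)
  show "W a r \<ge> 1 - (1/2) ^ a + (1/2) ^ (a + r)"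
  proof (induction r)
    case 0
    then show ?case by (simp add: W_def)
  next
    case (Suc r)
    let ?x = "W a r" and ?y = "(1/2::real) ^ (a + 1 + r)"
    have x1: "?x \<le> 1" unfolding W_def by (rule prod_le_1) (use f in blast)
    have y0: "?y \<ge> 0" by simp
    have "W a (Suc r) = ?x * (1 - ?y)" by (simp add: W_def)
    also have "\<dots> \<ge> ?x - ?y" using x1 y0 by (simp add: algebra_simps mult_left_le_one_le)
    finally have "W a (Suc r) \<ge> ?x - ?y" .
    moreover have "(1/2::real) ^ (a + Suc r) = ?y" by simp
    moreover have "(1/2::real) ^ (a + r) = 2 * ?y" by (simp add: power_add)
    ultimately show ?case using Suc.IH by linarith
  qed
qed

definition Q :: "nat \<Rightarrow> real" where
  "Q r = (\<Prod>j<r. 1 - (1/2) ^ Suc j)"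

lemma Q_pos: "Q r > 0"
  unfolding Q_def
proof (rule prod_pos)
  fix j :: nat
  have "(1/2::real)^Suc j < 1" by (rule power_Suc_less_one) auto
  then show "0 < 1 - (1/2::real) ^ Suc j" by simp
qed

lemma Num_Q: "Num r r = 2 ^ (r * r) * Q r"
  using Num_W[of 0 r] by (simp add: W_def Q_def)

lemma prob_closed:
  assumes "a \<le> m"
  shows "real (Nc m m (m - a)) / 2 ^ (m * m) \<ge> (1/2) ^ (a * a) * (1 - (1/2) ^ a) ^ 2 / Q (m - a)"
proof -
  define r where "r = m - a"
  have m: "m = a + r" using assms by (simp add: r_def)
  have N: "real (Nc m m r) = (2 ^ ((a + r) * r) * W a r) ^ 2 / (2 ^ (r * r) * Q r)"
    unfolding closed m Num_W Num_Q by (simp add: power2_eq_square)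
  have e: "((2::real) ^ ((a + r) * r)) ^ 2 = 2 ^ (r * r) * 2 ^ ((a + r) * (a + r)) * (1/2) ^ (a * a)"
  proof -
    have ne: "((a + r) * r) * 2 + a * a = r * r + (a + r) * (a + r)" by (simp add: algebra_simps)
    have "(2::real) ^ (((a + r) * r) * 2 + a * a) = 2 ^ (r * r + (a + r) * (a + r))" by (simp only: ne)
    then have h: "((2::real) ^ ((a + r) * r)) ^ 2 * 2 ^ (a * a) = 2 ^ (r * r) * 2 ^ ((a + r) * (a + r))"
      by (simp only: power_add power_mult)
    have one: "(2::real) ^ (a * a) * (1/2) ^ (a * a) = 1" by (simp add: power_mult_distrib[symmetric])
    have "((2::real) ^ ((a + r) * r)) ^ 2 = ((2::real) ^ ((a + r) * r)) ^ 2 * (2 ^ (a * a) * (1/2) ^ (a * a))"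
      by (simp only: one mult_1_right)
    also have "\<dots> = 2 ^ (r * r) * 2 ^ ((a + r) * (a + r)) * (1/2) ^ (a * a)"
      by (simp only: h mult.assoc[symmetric])
    finally show ?thesis .
  qed
  have Wb: "W a r ^ 2 \<ge> (1 - (1/2) ^ a) ^ 2"
  proof (rule power_mono)
    show "0 \<le> 1 - (1/2::real) ^ a" by (simp add: power_le_one)
    show "1 - (1/2::real) ^ a \<le> W a r" using W_bounds(3)[of a r] by (smt (verit) zero_le_power zero_le_divide_1_iff)
  qed
  have "real (Nc m m r) / 2 ^ (m * m) = ((2 ^ ((a + r) * r)) ^ 2 * W a r ^ 2) / (2 ^ (r * r) * 2 ^ ((a + r) * (a + r)) * Q r)"
    unfolding N unfolding m by (simp add: power_mult_distrib)
  also have "\<dots> = (1/2) ^ (a * a) * W a r ^ 2 / Q r"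
    unfolding e using Q_pos[of r] by simp
  also have "\<dots> \<ge> (1/2) ^ (a * a) * (1 - (1/2) ^ a) ^ 2 / Q r"
    using Wb Q_pos[of r] by (simp add: divide_right_mono)
  finally show ?thesis unfolding r_def .
qed



lemma powr_conv: "2 powr (- real n) = (1/2::real) ^ n"
  by (simp add: powr_minus powr_realpow power_one_over inverse_eq_divide)

theorem proposition2p4:
  fixes a :: nat
  assumes "a \<ge> 1"
  shows "\<exists>(n :: nat \<Rightarrow> nat) (U :: nat \<Rightarrow> (nat \<Rightarrow> bool) set).
     (\<forall>m. U m \<subseteq> f2vecs (n m) - {f2zero} \<and> finite (U m) \<and> card (U m) = 2 ^ m) \<and>
     liminf (\<lambda>m. ereal (f2prob m (n m)
        (\<lambda>B. card {u \<in> U m. f2apply (n m) B u = f2zero} > 2 ^ a - 2)))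
       \<ge> ereal (inverse gamma_const * 2 powr (- ((real a)^2)) * (1 - 2 powr (- real a))^2)"
proof -
  define c where "c = (1/2::real) ^ (a * a) * (1 - (1/2) ^ a) ^ 2"
  have "(\<lambda>n. c / Q n) \<longlonglongrightarrow> c / gamma_const"
    using gamma_lim gamma_nz unfolding Q_def by (intro tendsto_divide tendsto_const) auto
  then have "(\<lambda>n. c / Q ((n + a) - a)) \<longlonglongrightarrow> c / gamma_const" by simp
  then have "(\<lambda>m. c / Q (m - a)) \<longlonglongrightarrow> c / gamma_const" by (rule LIMSEQ_offset)
  then have "(\<lambda>m. ereal (c / Q (m - a))) \<longlonglongrightarrow> ereal (c / gamma_const)" by (rule tendsto_ereal)
  then have L: "liminf (\<lambda>m. ereal (c / Q (m - a))) = ereal (c / gamma_const)"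
    by (rule lim_imp_Liminf[rotated]) simp
  have ev: "eventually (\<lambda>m. ereal (c / Q (m - a)) \<le> ereal (f2prob m (Suc m)
        (\<lambda>B. card {u \<in> Uset m. f2apply (Suc m) B u = f2zero} > 2 ^ a - 2))) sequentially"
    unfolding eventually_sequentially
  proof (intro exI allI impI)
    fix m assume m: "a \<le> m"
    show "ereal (c / Q (m - a)) \<le> ereal (f2prob m (Suc m)
        (\<lambda>B. card {u \<in> Uset m. f2apply (Suc m) B u = f2zero} > 2 ^ a - 2))"
      using prob_lower[OF assms m] prob_closed[OF m] unfolding c_def by simp
  qed
  have R: "inverse gamma_const * 2 powr (- ((real a)^2)) * (1 - 2 powr (- real a))^2 = c / gamma_const"
  proof -
    have "- ((real a)^2) = - real (a * a)" by (simp add: power2_eq_square)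
    then show ?thesis unfolding c_def by (simp only: powr_conv) (simp add: field_simps)
  qed
  show ?thesis
  proof (intro exI conjI allI)
    fix m
    show "Uset m \<subseteq> f2vecs (Suc m) - {f2zero}" "finite (Uset m)" "card (Uset m) = 2 ^ m"
      by (rule Uset_props)+
  next
    show "liminf (\<lambda>m. ereal (f2prob m (Suc m)
        (\<lambda>B. card {u \<in> Uset m. f2apply (Suc m) B u = f2zero} > 2 ^ a - 2)))
       \<ge> ereal (inverse gamma_const * 2 powr (- ((real a)^2)) * (1 - 2 powr (- real a))^2)"
      unfolding R L[symmetric] by (rule Liminf_mono[OF ev])
  qed
qed

end
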